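(* Assume $\mathfrak g$ is semisimple, $\Omega$ is a strongly dominant prime ideal of $\mathcal S$ and $\lambda=\lambda_\Omega$, and let $\rho'=\frac12\sum_{\alpha\in R_\lambda^+}\alpha$. If $w\in W$ satisfies $w(R_\lambda)=R_\lambda$ and $w(B_\lambda)\not\subseteq R_\lambda^+$, then in $\mathcal S$ we have $w.h_{\rho'}=wh_{\rho'}-c$ for some constant $c\in F$ with $c>0$ (indeed $c$ is a positive rational number).
   Context: $F$ is an algebraically closed field of characteristic zero; $\mathfrak g$ is a semisimple Lie algebra over $F$ with Cartan subalgebra $\mathfrak h$, root system $R$, positive system $R^+$ with simple roots $B$, Weyl group $W$, $\rho=\frac12\sum_{\alpha\in R^+}\alpha$, dot action $w.\xi=w(\xi+\rho)-\rho$. $\kappa$ is the Killing form, $h_\mu\in\mathfrak h$ is defined by $\kappa(h_\mu,h)=\mu(h)$, and $H_\alpha$ is the coroot of $\alpha$. $\mathcal S=S(\mathfrak h)$ is identified with polynomial functions on $\mathfrak h^*$, with $(w.f)(\xi)=f(w^{-1}.\xi)$, and $wh$ denotes the linear action on $\mathfrak h$. For a prime $\Omega$, $\mathbb F$ is the fraction field of $\mathcal S/\Omega$, $\lambda_\Omega$ the $\mathbb F$-linear extension of $\mathfrak h\hookrightarrow\mathcal S\to\mathcal S/\Omega\hookrightarrow\mathbb F$. $P^+$ is the set of dominant integral weights; $\Omega$ is strongly dominant if $\mathcal V(\Omega)\cap P^+$ is Zariski dense in the zero set $\mathcal V(\Omega)$. For $\lambda=\lambda_\Omega$: $R_\lambda=\{\alpha\in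 R: H_\alpha-n\in\Omega\text{ for some }n\in\mathbb Z\}$, $R_\lambda^+=R^+\cap R_\lambda$, $B_\lambda$ the simple roots of $R_\lambda$ in $R_\lambda^+$. *)

theory Defs
  imports Main "HOL-Computational_Algebra.Polynomial"
begin

text \<open>Model: the Cartan subalgebra h and its dual h* are both represented as
  coordinate spaces 'n => 'f (with 'n a finite index type), paired by
  pair xi h = sum_i xi i * h i.  The semisimple Lie algebra enters only through
  its root system R in h* (w.r.t. the Cartan subalgebra h).\<close>

definition pair :: "('n::finite \<Rightarrow> 'f::field_char_0) \<Rightarrow> ('n \<Rightarrow> 'f) \<Rightarrow> 'f" where
  "pair xi h = (\<Sum>i\<in>UNIV. xi i * h i)"

definition vscale :: "'f::field_char_0 \<Rightarrow> ('n \<Rightarrow> 'f) \<Rightarrow> ('n \<Rightarrow> 'f)" where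
  "vscale c v = (\<lambda>i. c * v i)"

definition vadd :: "('n \<Rightarrow> 'f::field_char_0) \<Rightarrow> ('n \<Rightarrow> 'f) \<Rightarrow> ('n \<Rightarrow> 'f)" where
  "vadd u v = (\<lambda>i. u i + v i)"

definition vsub :: "('n \<Rightarrow> 'f::field_char_0) \<Rightarrow> ('n \<Rightarrow> 'f) \<Rightarrow> ('n \<Rightarrow> 'f)" where
  "vsub u v = (\<lambda>i. u i - v i)"

definition vsum :: "('a \<Rightarrow> 'n \<Rightarrow> 'f::field_char_0) \<Rightarrow> 'a set \<Rightarrow> ('n \<Rightarrow> 'f)" where
  "vsum f A = (\<lambda>i. \<Sum>a\<in>A. f a i)"

definition alg_closed_type :: "'f::field itself \<Rightarrow> bool" where
  "alg_closed_type _ \<longleftrightarrow> (\<forall>p :: 'f poly. degree p \<ge> 1 \<longrightarrow> (\<exists>x. poly p x = 0))"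

text \<open>Killing form restricted to h: kappa(h,h') = tr(ad h ad h') = sum over roots.\<close>
definition kappa :: "('n::finite \<Rightarrow> 'f::field_char_0) set \<Rightarrow> ('n \<Rightarrow> 'f) \<Rightarrow> ('n \<Rightarrow> 'f) \<Rightarrow> 'f" where
  "kappa R h h' = (\<Sum>\<alpha>\<in>R. pair \<alpha> h * pair \<alpha> h')"

definition hof :: "('n::finite \<Rightarrow> 'f::field_char_0) set \<Rightarrow> ('n \<Rightarrow> 'f) \<Rightarrow> ('n \<Rightarrow> 'f)" where
  "hof R \<mu> = (THE x. \<forall>h. kappa R x h = pair \<mu> h)"

definition coroot :: "('n::finite \<Rightarrow> 'f::field_char_0) set \<Rightarrow> ('n \<Rightarrow> 'f) \<Rightarrow> ('n \<Rightarrow> 'f)" where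
  "coroot R \<alpha> = vscale (2 / kappa R (hof R \<alpha>) (hof R \<alpha>)) (hof R \<alpha>)"

definition root_system :: "('n::finite \<Rightarrow> 'f::field_char_0) set \<Rightarrow> bool" where
  "root_system R \<longleftrightarrow> finite R \<and> (\<lambda>i. 0) \<notin> R \<and>
     (\<forall>\<xi>. \<exists>c. \<xi> = vsum (\<lambda>\<alpha>. vscale (c \<alpha>) \<alpha>) R) \<and>
     (\<forall>\<alpha>\<in>R. \<forall>c. vscale c \<alpha> \<in> R \<longrightarrow> c = 1 \<or> c = -1) \<and>
     (\<forall>\<alpha>\<in>R. \<exists>H. pair \<alpha> H = 2 \<and>
        (\<forall>\<beta>\<in>R. pair \<beta> H \<in> \<int> \<and> vsub \<beta> (vscale (pair \<beta> H) \<alpha>) \<in> R))"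

definition is_base :: "('n::finite \<Rightarrow> 'f::field_char_0) set \<Rightarrow> ('n \<Rightarrow> 'f) set \<Rightarrow> bool" where
  "is_base R B \<longleftrightarrow> B \<subseteq> R \<and>
     (\<forall>c. vsum (\<lambda>\<alpha>. vscale (c \<alpha>) \<alpha>) B = (\<lambda>i. 0) \<longrightarrow> (\<forall>\<alpha>\<in>B. c \<alpha> = 0)) \<and>
     (\<forall>\<beta>\<in>R. \<exists>k :: ('n \<Rightarrow> 'f) \<Rightarrow> int. \<beta> = vsum (\<lambda>\<alpha>. vscale (of_int (k \<alpha>)) \<alpha>) B \<and>
        ((\<forall>\<alpha>\<in>B. k \<alpha> \<ge> 0) \<or> (\<forall>\<alpha>\<in>B. k \<alpha> \<le> 0)))"

definition pos_roots :: "('n::finite \<Rightarrow> 'f::field_char_0) set \<Rightarrow> ('n \<Rightarrow> 'f) set \<Rightarrow> ('n \<Rightarrow> 'f) set" where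
  "pos_roots R B = {\<beta>\<in>R. \<exists>k :: ('n \<Rightarrow> 'f) \<Rightarrow> int. \<beta> = vsum (\<lambda>\<alpha>. vscale (of_int (k \<alpha>)) \<alpha>) B \<and>
        (\<forall>\<alpha>\<in>B. k \<alpha> \<ge> 0)}"

definition halfsum :: "('n::finite \<Rightarrow> 'f::field_char_0) set \<Rightarrow> ('n \<Rightarrow> 'f)" where
  "halfsum A = vscale (1/2) (vsum (\<lambda>\<alpha>. \<alpha>) A)"

definition refl :: "('n::finite \<Rightarrow> 'f::field_char_0) set \<Rightarrow> ('n \<Rightarrow> 'f) \<Rightarrow> ('n \<Rightarrow> 'f) \<Rightarrow> ('n \<Rightarrow> 'f)" where
  "refl R \<alpha> \<xi> = vsub \<xi> (vscale (pair \<xi> (coroot R \<alpha>)) \<alpha>)"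

inductive_set weyl :: "('n::finite \<Rightarrow> 'f::field_char_0) set \<Rightarrow> (('n \<Rightarrow> 'f) \<Rightarrow> ('n \<Rightarrow> 'f)) set"
  for R where
  weyl_id: "id \<in> weyl R"
| weyl_step: "w \<in> weyl R \<Longrightarrow> \<alpha> \<in> R \<Longrightarrow> refl R \<alpha> \<circ> w \<in> weyl R"

definition dot :: "('n::finite \<Rightarrow> 'f::field_char_0) set \<Rightarrow> ('n \<Rightarrow> 'f) set \<Rightarrow>
    (('n \<Rightarrow> 'f) \<Rightarrow> ('n \<Rightarrow> 'f)) \<Rightarrow> ('n \<Rightarrow> 'f) \<Rightarrow> ('n \<Rightarrow> 'f)" where
  "dot R B w \<xi> = vsub (w (vadd \<xi> (halfsum (pos_roots R B)))) (halfsum (pos_roots R B))"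

text \<open>S = S(h) as the ring of polynomial functions on h* (F is infinite, so this is
  isomorphic to the symmetric algebra). h embeds via h |-> (xi |-> xi(h)).\<close>
inductive_set polyfun :: "(('n::finite \<Rightarrow> 'f::field_char_0) \<Rightarrow> 'f) set" where
  pf_const: "(\<lambda>\<xi>. c) \<in> polyfun"
| pf_coord: "(\<lambda>\<xi>. \<xi> i) \<in> polyfun"
| pf_add: "f \<in> polyfun \<Longrightarrow> g \<in> polyfun \<Longrightarrow> (\<lambda>\<xi>. f \<xi> + g \<xi>) \<in> polyfun"
| pf_mult: "f \<in> polyfun \<Longrightarrow> g \<in> polyfun \<Longrightarrow> (\<lambda>\<xi>. f \<xi> * g \<xi>) \<in> polyfun"

definition as_S :: "('n::finite \<Rightarrow> 'f::field_char_0) \<Rightarrow> (('n \<Rightarrow> 'f) \<Rightarrow> 'f)" where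
  "as_S h = (\<lambda>\<xi>. pair \<xi> h)"

definition prime_ideal_S :: "(('n::finite \<Rightarrow> 'f::field_char_0) \<Rightarrow> 'f) set \<Rightarrow> bool" where
  "prime_ideal_S \<Omega> \<longleftrightarrow> \<Omega> \<subseteq> polyfun \<and> (\<lambda>\<xi>. 0) \<in> \<Omega> \<and>
     (\<forall>f\<in>\<Omega>. \<forall>g\<in>\<Omega>. (\<lambda>\<xi>. f \<xi> + g \<xi>) \<in> \<Omega>) \<and>
     (\<forall>f\<in>\<Omega>. \<forall>g\<in>polyfun. (\<lambda>\<xi>. g \<xi> * f \<xi>) \<in> \<Omega>) \<and>
     (\<lambda>\<xi>. 1) \<notin> \<Omega> \<and>
     (\<forall>f\<in>polyfun. \<forall>g\<in>polyfun. (\<lambda>\<xi>. f \<xi> * g \<xi>) \<in> \<Omega> \<longrightarrow> f \<in> \<Omega> \<or> g \<in> \<Omega>)"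

definition zero_set :: "(('n::finite \<Rightarrow> 'f::field_char_0) \<Rightarrow> 'f) set \<Rightarrow> ('n \<Rightarrow> 'f) set" where
  "zero_set \<Omega> = {\<xi>. \<forall>f\<in>\<Omega>. f \<xi> = 0}"

definition dom_int :: "('n::finite \<Rightarrow> 'f::field_char_0) set \<Rightarrow> ('n \<Rightarrow> 'f) set \<Rightarrow> ('n \<Rightarrow> 'f) set" where
  "dom_int R B = {\<xi>. (\<forall>\<alpha>\<in>R. pair \<xi> (coroot R \<alpha>) \<in> \<int>) \<and> (\<forall>\<alpha>\<in>B. pair \<xi> (coroot R \<alpha>) \<in> \<nat>)}"

definition zariski_dense_in :: "('n::finite \<Rightarrow> 'f::field_char_0) set \<Rightarrow> ('n \<Rightarrow> 'f) set \<Rightarrow> bool" where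
  "zariski_dense_in A V \<longleftrightarrow> A \<subseteq> V \<and>
     (\<forall>f\<in>polyfun. (\<forall>\<xi>\<in>A. f \<xi> = 0) \<longrightarrow> (\<forall>\<xi>\<in>V. f \<xi> = 0))"

definition strongly_dominant :: "('n::finite \<Rightarrow> 'f::field_char_0) set \<Rightarrow> ('n \<Rightarrow> 'f) set \<Rightarrow>
    (('n \<Rightarrow> 'f) \<Rightarrow> 'f) set \<Rightarrow> bool" where
  "strongly_dominant R B \<Omega> \<longleftrightarrow> zariski_dense_in (zero_set \<Omega> \<inter> dom_int R B) (zero_set \<Omega>)"

text \<open>R_lambda for lambda = lambda_Omega: roots with H_alpha - n in Omega for some integer n.\<close>
definition R_lam :: "('n::finite \<Rightarrow> 'f::field_char_0) set \<Rightarrow> (('n \<Rightarrow> 'f) \<Rightarrow> 'f) set \<Rightarrow> ('n \<Rightarrow> 'f) set" where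
  "R_lam R \<Omega> = {\<alpha>\<in>R. \<exists>n::int. (\<lambda>\<xi>. as_S (coroot R \<alpha>) \<xi> - of_int n) \<in> \<Omega>}"

definition R_lam_pos :: "('n::finite \<Rightarrow> 'f::field_char_0) set \<Rightarrow> ('n \<Rightarrow> 'f) set \<Rightarrow>
    (('n \<Rightarrow> 'f) \<Rightarrow> 'f) set \<Rightarrow> ('n \<Rightarrow> 'f) set" where
  "R_lam_pos R B \<Omega> = pos_roots R B \<inter> R_lam R \<Omega>"

text \<open>Simple roots of R_lambda w.r.t. R_lambda^+: indecomposable positive roots.\<close>
definition B_lam :: "('n::finite \<Rightarrow> 'f::field_char_0) set \<Rightarrow> ('n \<Rightarrow> 'f) set \<Rightarrow>
    (('n \<Rightarrow> 'f) \<Rightarrow> 'f) set \<Rightarrow> ('n \<Rightarrow> 'f) set" where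
  "B_lam R B \<Omega> = {\<alpha>\<in>R_lam_pos R B \<Omega>.
     \<not> (\<exists>\<beta>\<in>R_lam_pos R B \<Omega>. \<exists>\<gamma>\<in>R_lam_pos R B \<Omega>. \<alpha> = vadd \<beta> \<gamma>)}"

definition dot_S :: "('n::finite \<Rightarrow> 'f::field_char_0) set \<Rightarrow> ('n \<Rightarrow> 'f) set \<Rightarrow>
    (('n \<Rightarrow> 'f) \<Rightarrow> ('n \<Rightarrow> 'f)) \<Rightarrow> (('n \<Rightarrow> 'f) \<Rightarrow> 'f) \<Rightarrow> (('n \<Rightarrow> 'f) \<Rightarrow> 'f)" where
  "dot_S R B w f = (\<lambda>\<xi>. f (dot R B (inv w) \<xi>))"

definition lin_S :: "(('n::finite \<Rightarrow> 'f::field_char_0) \<Rightarrow> ('n \<Rightarrow> 'f)) \<Rightarrow> (('n \<Rightarrow> 'f) \<Rightarrow> 'f) \<Rightarrow> (('n \<Rightarrow> 'f) \<Rightarrow> 'f)" where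
  "lin_S w f = (\<lambda>\<xi>. f (inv w \<xi>))"

end

theory Submission
  imports Defs "HOL-Library.Function_Algebras"
begin

section \<open>Basic vector algebra\<close>

lemma sum_fun_apply': "sum f A i = (\<Sum>a\<in>A. f a i)"
  by (induction A rule: infinite_finite_induct) auto

lemma vadd_eq: "vadd u v = u + v" by (rule ext) (simp add: vadd_def)
lemma vsub_eq: "vsub u v = u - v" by (rule ext) (simp add: vsub_def)
lemma vsum_eq: "vsum f A = sum f A" by (rule ext) (simp add: vsum_def sum_fun_apply')
lemma vscale_apply[simp]: "vscale c v i = c * v i" by (simp add: vscale_def)

lemma vscale_add: "vscale c (u + v) = vscale c u + vscale c v"
  by (rule ext) (simp add: algebra_simps)
lemma vscale_diff: "vscale c (u - v) = vscale c u - vscale c v"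
  by (rule ext) (simp add: algebra_simps)
lemma vscale_add_left: "vscale (a + b) u = vscale a u + vscale b u"
  by (rule ext) (simp add: algebra_simps)
lemma vscale_diff_left: "vscale (a - b) u = vscale a u - vscale b u"
  by (rule ext) (simp add: algebra_simps)
lemma vscale_scale[simp]: "vscale a (vscale b u) = vscale (a * b) u"
  by (rule ext) simp
lemma vscale_one[simp]: "vscale 1 u = u" by (rule ext) simp
lemma vscale_zero[simp]: "vscale 0 u = 0" by (rule ext) simp
lemma vscale_zero_right[simp]: "vscale c 0 = 0" by (rule ext) simp
lemma vscale_minus_one: "vscale (-1) u = - u" by (rule ext) simp
lemma vscale_uminus: "vscale c (- u) = - vscale c u" by (rule ext) simp
lemma vscale_uminus_left: "vscale (- c) u = - vscale c u" by (rule ext) simp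
lemma vscale_sum: "vscale c (sum f A) = (\<Sum>a\<in>A. vscale c (f a))"
  by (rule ext) (simp add: sum_fun_apply' sum_distrib_left)
lemma vscale_sum_left: "vscale (sum f A) u = (\<Sum>a\<in>A. vscale (f a) u)"
  by (rule ext) (simp add: sum_fun_apply' sum_distrib_right)

lemma pair_add_left: "pair (u + v) h = pair u h + pair v h"
  by (simp add: pair_def sum.distrib distrib_right)
lemma pair_add_right: "pair h (u + v) = pair h u + pair h v"
  by (simp add: pair_def sum.distrib distrib_left)
lemma pair_diff_left: "pair (u - v) h = pair u h - pair v h"
  by (simp add: pair_def sum_subtractf left_diff_distrib)
lemma pair_diff_right: "pair h (u - v) = pair h u - pair h v"
  by (simp add: pair_def sum_subtractf right_diff_distrib)
lemma pair_uminus_left: "pair (- u) h = - pair u h"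
  by (simp add: pair_def sum_negf)
lemma pair_uminus_right: "pair h (- u) = - pair h u"
  by (simp add: pair_def sum_negf)
lemma pair_scale_left: "pair (vscale c u) h = c * pair u h"
  by (simp add: pair_def sum_distrib_left mult.assoc)
lemma pair_scale_right: "pair h (vscale c u) = c * pair h u"
  by (simp add: pair_def sum_distrib_left algebra_simps)
lemma pair_zero_left[simp]: "pair 0 h = 0" by (simp add: pair_def)
lemma pair_zero_right[simp]: "pair h 0 = 0" by (simp add: pair_def)
lemma pair_sum_left: "pair (sum f A) h = (\<Sum>a\<in>A. pair (f a) h)"
  by (simp add: pair_def sum_fun_apply' sum_distrib_right) (rule sum.swap)
lemma pair_sum_right: "pair h (sum f A) = (\<Sum>a\<in>A. pair h (f a))"
  by (simp add: pair_def sum_fun_apply' sum_distrib_left) (rule sum.swap)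
lemma pair_comm: "pair u h = pair h u"
  by (simp add: pair_def mult.commute)

lemmas pair_simps = pair_add_left pair_add_right pair_diff_left pair_diff_right
  pair_uminus_left pair_uminus_right pair_scale_left pair_scale_right pair_sum_left pair_sum_right

lemma pair_eq_zero:
  fixes u :: "'n::finite \<Rightarrow> 'f::field_char_0"
  assumes "\<And>h. pair u h = 0" shows "u = 0"
proof (rule ext)
  fix i
  have "pair u (\<lambda>j. if j = i then 1 else 0) = u i"
    by (simp add: pair_def if_distrib cong: if_cong)
  then show "u i = 0 i" using assms by simp
qed

lemma kappa_add_left: "kappa R (x + y) z = kappa R x z + kappa R y z"
  by (simp add: kappa_def pair_add_right sum.distrib distrib_right)
lemma kappa_diff_left: "kappa R (x - y) z = kappa R x z - kappa R y z"
  by (simp add: kappa_def pair_diff_right sum_subtractf left_diff_distrib)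
lemma kappa_scale_left: "kappa R (vscale c x) z = c * kappa R x z"
  by (simp add: kappa_def pair_scale_right sum_distrib_left mult.assoc)
lemma kappa_uminus_left: "kappa R (- x) z = - kappa R x z"
  by (simp add: kappa_def pair_simps sum_negf)
lemma kappa_sum_left: "kappa R (sum f A) z = (\<Sum>a\<in>A. kappa R (f a) z)"
  unfolding kappa_def pair_sum_right by (simp add: sum_distrib_right) (rule sum.swap)
lemma kappa_sym: "kappa R x y = kappa R y x"
  by (simp add: kappa_def mult.commute)


section \<open>Root system facts\<close>

locale RS =
  fixes R :: "('n::finite \<Rightarrow> 'f::field_char_0) set"
  assumes rs: "root_system R"
begin

lemma finR: "finite R" using rs by (simp add: root_system_def)
lemma zero_notin: "0 \<notin> R" using rs by (simp add: root_system_def zero_fun_def)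
lemma span: "\<exists>c. \<xi> = sum (\<lambda>\<alpha>. vscale (c \<alpha>) \<alpha>) R"
  using rs by (simp add: root_system_def vsum_eq)
lemma reduced: "\<alpha> \<in> R \<Longrightarrow> vscale c \<alpha> \<in> R \<Longrightarrow> c = 1 \<or> c = -1"
  using rs by (simp add: root_system_def)

definition Hc :: "('n \<Rightarrow> 'f) \<Rightarrow> ('n \<Rightarrow> 'f)" where
  "Hc \<alpha> = (SOME H. pair \<alpha> H = 2 \<and> (\<forall>\<beta>\<in>R. pair \<beta> H \<in> \<int> \<and> \<beta> - vscale (pair \<beta> H) \<alpha> \<in> R))"

lemma Hc: assumes "\<alpha> \<in> R"
  shows "pair \<alpha> (Hc \<alpha>) = 2" "\<And>\<beta>. \<beta> \<in> R \<Longrightarrow> pair \<beta> (Hc \<alpha>) \<in> \<int>"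
    "\<And>\<beta>. \<beta> \<in> R \<Longrightarrow> \<beta> - vscale (pair \<beta> (Hc \<alpha>)) \<alpha> \<in> R"
proof -
  have "\<exists>H. pair \<alpha> H = 2 \<and> (\<forall>\<beta>\<in>R. pair \<beta> H \<in> \<int> \<and> \<beta> - vscale (pair \<beta> H) \<alpha> \<in> R)"
    using rs assms by (simp add: root_system_def vsub_eq)
  from someI_ex[OF this] show "pair \<alpha> (Hc \<alpha>) = 2" "\<And>\<beta>. \<beta> \<in> R \<Longrightarrow> pair \<beta> (Hc \<alpha>) \<in> \<int>"
    "\<And>\<beta>. \<beta> \<in> R \<Longrightarrow> \<beta> - vscale (pair \<beta> (Hc \<alpha>)) \<alpha> \<in> R"
    unfolding Hc_def by blast+
qed

definition sr :: "('n \<Rightarrow> 'f) \<Rightarrow> ('n \<Rightarrow> 'f) \<Rightarrow> ('n \<Rightarrow> 'f)" where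
  "sr \<alpha> \<xi> = \<xi> - vscale (pair \<xi> (Hc \<alpha>)) \<alpha>"
definition sd :: "('n \<Rightarrow> 'f) \<Rightarrow> ('n \<Rightarrow> 'f) \<Rightarrow> ('n \<Rightarrow> 'f)" where
  "sd \<alpha> x = x - vscale (pair \<alpha> x) (Hc \<alpha>)"

lemma sr_R: "\<alpha> \<in> R \<Longrightarrow> \<beta> \<in> R \<Longrightarrow> sr \<alpha> \<beta> \<in> R"
  using Hc(3) by (simp add: sr_def)

lemma sr_invol: assumes "\<alpha> \<in> R" shows "sr \<alpha> (sr \<alpha> \<xi>) = \<xi>"
proof -
  have h: "pair (sr \<alpha> \<xi>) (Hc \<alpha>) = - pair \<xi> (Hc \<alpha>)"
    by (simp add: sr_def pair_diff_left pair_scale_left Hc(1)[OF assms])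
  show ?thesis apply (subst (1) sr_def) apply (simp only: h) apply (rule ext) by (simp add: sr_def)
qed

lemma sd_invol: assumes "\<alpha> \<in> R" shows "sd \<alpha> (sd \<alpha> x) = x"
proof -
  have h: "pair \<alpha> (sd \<alpha> x) = - pair \<alpha> x"
    by (simp add: sd_def pair_diff_right pair_scale_right Hc(1)[OF assms])
  show ?thesis apply (subst (1) sd_def) apply (simp only: h) apply (rule ext) by (simp add: sd_def)
qed

lemma sr_self: "\<alpha> \<in> R \<Longrightarrow> sr \<alpha> \<alpha> = - \<alpha>"
  by (simp add: sr_def Hc(1)) (rule ext, simp)

lemma sd_H: "\<alpha> \<in> R \<Longrightarrow> sd \<alpha> (Hc \<alpha>) = - Hc \<alpha>"
  by (simp add: sd_def Hc(1)) (rule ext, simp)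

lemma pair_sr_sd: "pair (sr \<alpha> \<mu>) x = pair \<mu> (sd \<alpha> x)"
  by (simp add: sr_def sd_def pair_simps mult.commute)

lemma sr_bij: "\<alpha> \<in> R \<Longrightarrow> bij_betw (sr \<alpha>) R R"
  by (rule bij_betw_byWitness[where f'="sr \<alpha>"]) (auto simp: sr_invol sr_R)

lemma minus_R: "\<alpha> \<in> R \<Longrightarrow> - \<alpha> \<in> R"
  using sr_R[of \<alpha> \<alpha>] sr_self by simp

abbreviation kap where "kap \<equiv> kappa R"

lemma kap_sd: assumes "\<alpha> \<in> R" shows "kap (sd \<alpha> x) (sd \<alpha> y) = kap x y"
proof -
  have "kap (sd \<alpha> x) (sd \<alpha> y) = (\<Sum>\<beta>\<in>R. pair (sr \<alpha> \<beta>) x * pair (sr \<alpha> \<beta>) y)"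
    by (simp add: kappa_def pair_sr_sd)
  also have "\<dots> = kap x y"
    unfolding kappa_def
    by (rule sum.reindex_bij_betw[OF sr_bij[OF assms], where g="\<lambda>\<beta>. pair \<beta> x * pair \<beta> y"])
  finally show ?thesis .
qed

definition Nc :: "('n \<Rightarrow> 'f) \<Rightarrow> 'f" where "Nc \<alpha> = kap (Hc \<alpha>) (Hc \<alpha>)"

lemma kap_H: assumes "\<alpha> \<in> R" shows "kap (Hc \<alpha>) y = Nc \<alpha> / 2 * pair \<alpha> y"
proof -
  define z where "z = y - vscale (pair \<alpha> y / 2) (Hc \<alpha>)"
  have pz: "pair \<alpha> z = 0" by (simp add: z_def pair_simps Hc(1)[OF assms])
  have sdz: "sd \<alpha> z = z" by (simp add: sd_def pz)
  have "kap (Hc \<alpha>) z = kap (sd \<alpha> (Hc \<alpha>)) (sd \<alpha> z)" by (simp add: kap_sd assms)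
  also have "\<dots> = - kap (Hc \<alpha>) z" by (simp add: sdz sd_H assms kappa_uminus_left)
  finally have k0: "kap (Hc \<alpha>) z = 0" by simp
  have y: "y = z + vscale (pair \<alpha> y / 2) (Hc \<alpha>)" by (rule ext) (simp add: z_def)
  have "kap (Hc \<alpha>) y = kap (Hc \<alpha>) z + pair \<alpha> y / 2 * Nc \<alpha>"
  proof -
    have "kap (Hc \<alpha>) y = kap y (Hc \<alpha>)" by (rule kappa_sym)
    also have "\<dots> = kap z (Hc \<alpha>) + pair \<alpha> y / 2 * Nc \<alpha>"
      by (subst y) (simp only: kappa_add_left kappa_scale_left Nc_def)
    finally show ?thesis by (simp add: kappa_sym)
  qed
  then show ?thesis using k0 by simp
qed

definition Ni :: "('n \<Rightarrow> 'f) \<Rightarrow> int" where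
  "Ni \<alpha> = (\<Sum>\<beta>\<in>R. (THE m. pair \<beta> (Hc \<alpha>) = of_int m)^2)"

lemma Nc_Ni: assumes "\<alpha> \<in> R" shows "Nc \<alpha> = of_int (Ni \<alpha>)" "Ni \<alpha> \<ge> 4"
proof -
  have th: "pair \<beta> (Hc \<alpha>) = of_int (THE m. pair \<beta> (Hc \<alpha>) = of_int m)" if "\<beta> \<in> R" for \<beta>
  proof -
    obtain m where m: "pair \<beta> (Hc \<alpha>) = of_int m" using Hc(2)[OF assms \<open>\<beta> \<in> R\<close>] Ints_cases by metis
    then have "(THE m. pair \<beta> (Hc \<alpha>) = of_int m) = m" by (intro the_equality) auto
    then show ?thesis using m by simp
  qed
  show "Nc \<alpha> = of_int (Ni \<alpha>)"
    unfolding Nc_def kappa_def Ni_def of_int_sum of_int_power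
    by (rule sum.cong) (auto simp: th[symmetric] power2_eq_square)
  have t\<alpha>: "(THE m. pair \<alpha> (Hc \<alpha>) = of_int m) = 2"
    by (rule the_equality) (simp_all add: Hc(1)[OF assms])
  have "Ni \<alpha> = (THE m. pair \<alpha> (Hc \<alpha>) = of_int m)^2 + (\<Sum>\<beta>\<in>R-{\<alpha>}. (THE m. pair \<beta> (Hc \<alpha>) = of_int m)^2)"
    unfolding Ni_def using finR assms by (simp add: sum.remove)
  moreover have "(\<Sum>\<beta>\<in>R-{\<alpha>}. (THE m. pair \<beta> (Hc \<alpha>) = of_int m)^2) \<ge> 0" by (rule sum_nonneg) simp
  ultimately show "Ni \<alpha> \<ge> 4" using t\<alpha> by simp
qed

lemma Nc_nz: "\<alpha> \<in> R \<Longrightarrow> Nc \<alpha> \<noteq> 0" using Nc_Ni[of \<alpha>] by auto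


lemma pair_roots_zero: assumes "\<And>\<alpha>. \<alpha> \<in> R \<Longrightarrow> pair \<alpha> x = 0" shows "x = 0"
proof (rule pair_eq_zero)
  fix h
  obtain c where c: "h = sum (\<lambda>\<alpha>. vscale (c \<alpha>) \<alpha>) R" using span by blast
  have "pair h x = (\<Sum>\<alpha>\<in>R. c \<alpha> * pair \<alpha> x)" by (simp add: c pair_sum_left pair_scale_left)
  also have "\<dots> = 0" using assms by simp
  finally show "pair x h = 0" by (simp add: pair_comm)
qed

lemma kap_nondeg: assumes "\<And>y. kap x y = 0" shows "x = 0"
proof (rule pair_roots_zero)
  fix \<alpha> assume a: "\<alpha> \<in> R"
  have "0 = kap (Hc \<alpha>) x" by (metis assms kappa_sym)
  also have "\<dots> = Nc \<alpha> / 2 * pair \<alpha> x" by (rule kap_H[OF a])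
  finally show "pair \<alpha> x = 0" using Nc_nz[OF a] by simp
qed

lemma hof_ex1: "\<exists>!x. \<forall>h. kap x h = pair \<mu> h"
proof -
  obtain c where c: "\<mu> = sum (\<lambda>\<alpha>. vscale (c \<alpha>) \<alpha>) R" using span by blast
  define x where "x = (\<Sum>\<alpha>\<in>R. vscale (c \<alpha> * 2 / Nc \<alpha>) (Hc \<alpha>))"
  have "kap x h = pair \<mu> h" for h
  proof -
    have "kap x h = (\<Sum>\<alpha>\<in>R. c \<alpha> * 2 / Nc \<alpha> * (Nc \<alpha> / 2 * pair \<alpha> h))"
      unfolding x_def kappa_sum_left kappa_scale_left
      by (rule sum.cong) (simp_all add: kap_H)
    also have "\<dots> = (\<Sum>\<alpha>\<in>R. c \<alpha> * pair \<alpha> h)"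
      by (rule sum.cong) (simp_all add: Nc_nz)
    also have "\<dots> = pair \<mu> h" by (simp add: c pair_sum_left pair_scale_left)
    finally show ?thesis .
  qed
  moreover have "y = x" if "\<forall>h. kap y h = pair \<mu> h" for y
  proof -
    have "y - x = 0"
      by (rule kap_nondeg) (simp add: kappa_diff_left that \<open>\<And>h. kap x h = pair \<mu> h\<close>)
    then show ?thesis by simp
  qed
  ultimately show ?thesis by blast
qed

lemma hof_char: "kap (hof R \<mu>) h = pair \<mu> h"
  using theI'[OF hof_ex1[of \<mu>]] unfolding hof_def by blast

lemma hof_unique: "(\<And>h. kap x h = pair \<mu> h) \<Longrightarrow> hof R \<mu> = x"
  using hof_ex1[of \<mu>] hof_char[of \<mu>] by blast

lemma hof_add: "hof R (u + v) = hof R u + hof R v"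
  by (rule hof_unique) (simp add: kappa_add_left hof_char pair_add_left)
lemma hof_diff: "hof R (u - v) = hof R u - hof R v"
  by (rule hof_unique) (simp add: kappa_diff_left hof_char pair_diff_left)
lemma hof_uminus: "hof R (- u) = - hof R u"
  by (rule hof_unique) (simp add: kappa_uminus_left hof_char pair_uminus_left)
lemma hof_scale: "hof R (vscale c u) = vscale c (hof R u)"
  by (rule hof_unique) (simp add: kappa_scale_left hof_char pair_scale_left)
lemma hof_sum: "hof R (sum f A) = (\<Sum>a\<in>A. hof R (f a))"
  by (rule hof_unique) (simp add: kappa_sum_left hof_char pair_sum_left)

lemma hof_root: assumes "\<alpha> \<in> R" shows "hof R \<alpha> = vscale (2 / Nc \<alpha>) (Hc \<alpha>)"
  by (rule hof_unique) (simp add: kappa_scale_left kap_H[OF assms] Nc_nz[OF assms])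

lemma coroot_eq: assumes "\<alpha> \<in> R" shows "coroot R \<alpha> = Hc \<alpha>"
proof -
  have "kap (hof R \<alpha>) (hof R \<alpha>) = 4 / Nc \<alpha>"
    by (subst hof_char) (simp add: hof_root[OF assms] pair_scale_right Hc(1)[OF assms])
  then show ?thesis
    by (simp add: coroot_def hof_root[OF assms] Nc_nz[OF assms])
qed

lemma refl_eq: "\<alpha> \<in> R \<Longrightarrow> refl R \<alpha> = sr \<alpha>"
  by (rule ext) (simp add: refl_def sr_def coroot_eq vsub_eq)

lemma hof_sr: assumes "\<alpha> \<in> R" shows "hof R (sr \<alpha> \<nu>) = sd \<alpha> (hof R \<nu>)"
proof (rule hof_unique)
  fix h
  have "kap (sd \<alpha> (hof R \<nu>)) h = kap (sd \<alpha> (hof R \<nu>)) (sd \<alpha> (sd \<alpha> h))"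
    by (simp add: sd_invol[OF assms])
  also have "\<dots> = kap (hof R \<nu>) (sd \<alpha> h)" by (rule kap_sd[OF assms])
  also have "\<dots> = pair \<nu> (sd \<alpha> h)" by (rule hof_char)
  also have "\<dots> = pair (sr \<alpha> \<nu>) h" by (simp add: pair_sr_sd)
  finally show "kap (sd \<alpha> (hof R \<nu>)) h = pair (sr \<alpha> \<nu>) h" .
qed

lemma pair_sr_hof: "\<alpha> \<in> R \<Longrightarrow> pair (sr \<alpha> \<mu>) (hof R \<nu>) = pair \<mu> (hof R (sr \<alpha> \<nu>))"
  by (simp add: pair_sr_sd hof_sr)

definition lin :: "(('n \<Rightarrow> 'f) \<Rightarrow> ('n \<Rightarrow> 'f)) \<Rightarrow> bool" where
  "lin f \<longleftrightarrow> (\<forall>u v. f (u + v) = f u + f v) \<and> (\<forall>c u. f (vscale c u) = vscale c (f u))"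

lemma lin_sr: "lin (sr \<alpha>)"
  unfolding lin_def
proof (intro conjI allI)
  fix u v :: "'n \<Rightarrow> 'f"
  show "sr \<alpha> (u + v) = sr \<alpha> u + sr \<alpha> v"
    by (rule ext) (simp add: sr_def pair_add_left algebra_simps)
  fix c
  show "sr \<alpha> (vscale c u) = vscale c (sr \<alpha> u)"
    by (rule ext) (simp add: sr_def pair_scale_left algebra_simps)
qed

lemma lin_comp: "lin f \<Longrightarrow> lin g \<Longrightarrow> lin (f \<circ> g)"
  by (simp add: lin_def)

lemma lin_id: "lin id" unfolding lin_def by simp
lemma lin_id': "lin (\<lambda>a. a)" unfolding lin_def by simp

lemma weyl_props: assumes "w \<in> weyl R"
  shows "\<exists>w'. w \<circ> w' = id \<and> w' \<circ> w = id \<and> lin w \<and> lin w' \<and>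
     (\<forall>\<mu> \<nu>. pair (w' \<mu>) (hof R \<nu>) = pair \<mu> (hof R (w \<nu>)))"
  using assms
proof (induction rule: weyl.induct)
  case weyl_id
  then show ?case by (intro exI[of _ id]) (simp add: lin_id')
next
  case (weyl_step w \<alpha>)
  then obtain w' where w': "w \<circ> w' = id" "w' \<circ> w = id" "lin w" "lin w'"
     "\<And>\<mu> \<nu>. pair (w' \<mu>) (hof R \<nu>) = pair \<mu> (hof R (w \<nu>))" by blast
  have inv: "sr \<alpha> \<circ> sr \<alpha> = id" by (rule ext) (simp add: sr_invol weyl_step.hyps(2))
  show ?case unfolding refl_eq[OF weyl_step.hyps(2)]
  proof (intro exI[of _ "w' \<circ> sr \<alpha>"] conjI allI)
    have w1: "w (w' x) = x" for x using w'(1) by (metis comp_apply id_apply)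
    have w2: "w' (w x) = x" for x using w'(2) by (metis comp_apply id_apply)
    show "sr \<alpha> \<circ> w \<circ> (w' \<circ> sr \<alpha>) = id"
      by (rule ext) (simp add: w1 sr_invol weyl_step.hyps(2))
    show "w' \<circ> sr \<alpha> \<circ> (sr \<alpha> \<circ> w) = id"
      by (rule ext) (simp add: w2 sr_invol weyl_step.hyps(2))
    show "lin (sr \<alpha> \<circ> w)" by (simp add: lin_comp lin_sr w'(3))
    show "lin (w' \<circ> sr \<alpha>)" by (simp add: lin_comp lin_sr w'(4))
    fix \<mu> \<nu>
    show "pair ((w' \<circ> sr \<alpha>) \<mu>) (hof R \<nu>) = pair \<mu> (hof R ((sr \<alpha> \<circ> w) \<nu>))"
      by (simp add: w'(5) pair_sr_hof weyl_step.hyps(2))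
  qed
qed

lemma lin_zero: "lin f \<Longrightarrow> f 0 = 0"
  unfolding lin_def by (metis vscale_zero)

lemma lin_sum: "lin f \<Longrightarrow> f (sum g A) = (\<Sum>a\<in>A. f (g a))"
proof (induction A rule: infinite_finite_induct)
  case (infinite A)
  then show ?case by (metis sum.infinite lin_zero)
next
  case empty
  then show ?case by (metis sum.empty lin_zero)
next
  case (insert x F)
  have "f (sum g (insert x F)) = f (g x + sum g F)" by (rule arg_cong[where f=f], rule sum.insert[OF insert(1,2)])
  also have "\<dots> = f (g x) + f (sum g F)" using insert(4) unfolding lin_def by blast
  also have "\<dots> = (\<Sum>a\<in>insert x F. f (g a))" by (simp only: sum.insert[OF insert(1,2)] insert.IH[OF insert.prems])
  finally show ?case .
qed

lemma lin_uminus: "lin f \<Longrightarrow> f (- u) = - f u"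
  unfolding lin_def by (metis vscale_minus_one)

lemma lin_diff: "lin f \<Longrightarrow> f (u - v) = f u - f v"
  using lin_uminus[of f v] unfolding lin_def by (metis diff_conv_add_uminus)

end

locale RSB = RS R for R :: "('n::finite \<Rightarrow> 'f::field_char_0) set" +
  fixes B :: "('n \<Rightarrow> 'f) set"
  assumes base: "is_base R B"
begin

declare vscale_apply[simp del] plus_fun_apply[simp del] zero_fun_apply[simp del]

lemma BR: "B \<subseteq> R" using base by (simp add: is_base_def)
lemma finB: "finite B" using BR finR finite_subset by blast

definition lc :: "(('n \<Rightarrow> 'f) \<Rightarrow> int) \<Rightarrow> ('n \<Rightarrow> 'f)" where
  "lc k = (\<Sum>\<alpha>\<in>B. vscale (of_int (k \<alpha>)) \<alpha>)"

lemma indep: "(\<Sum>\<alpha>\<in>B. vscale (c \<alpha>) \<alpha>) = 0 \<Longrightarrow> \<alpha> \<in> B \<Longrightarrow> c \<alpha> = 0"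
  using base unfolding is_base_def vsum_eq zero_fun_def by blast

lemma coords: "\<beta> \<in> R \<Longrightarrow> \<exists>k. \<beta> = lc k \<and> ((\<forall>\<alpha>\<in>B. k \<alpha> \<ge> 0) \<or> (\<forall>\<alpha>\<in>B. k \<alpha> \<le> 0))"
  using base unfolding is_base_def vsum_eq lc_def by blast

lemma Rp_def': "pos_roots R B = {\<beta>\<in>R. \<exists>k. \<beta> = lc k \<and> (\<forall>\<alpha>\<in>B. k \<alpha> \<ge> 0)}"
  unfolding pos_roots_def vsum_eq lc_def by simp

abbreviation Rp where "Rp \<equiv> pos_roots R B"

lemma finRp: "finite Rp" using finR by (simp add: Rp_def')
lemma RpR: "Rp \<subseteq> R" by (auto simp: Rp_def')

lemma lc_diff: "lc k - lc j = (\<Sum>\<alpha>\<in>B. vscale (of_int (k \<alpha>) - of_int (j \<alpha>)) \<alpha>)"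
  unfolding lc_def by (simp add: sum_subtractf[symmetric] vscale_diff_left)

lemma uniq: assumes "lc k = lc j" "\<alpha> \<in> B" shows "k \<alpha> = j \<alpha>"
proof -
  have "(\<Sum>\<alpha>\<in>B. vscale (of_int (k \<alpha>) - of_int (j \<alpha>)) \<alpha>) = 0"
    using assms(1) lc_diff[of k j] by simp
  from indep[OF this assms(2)] show ?thesis by simp
qed

lemma lc_uminus: "- lc k = lc (\<lambda>\<alpha>. - k \<alpha>)"
  unfolding lc_def by (simp add: sum_negf[symmetric] vscale_uminus_left)

lemma lc_zero: "lc (\<lambda>\<alpha>. 0) = 0"
  unfolding lc_def by simp

lemma lc_single: assumes "\<gamma> \<in> B" "\<And>\<delta>. \<delta> \<in> B \<Longrightarrow> \<delta> \<noteq> \<gamma> \<Longrightarrow> k \<delta> = 0"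
  shows "lc k = vscale (of_int (k \<gamma>)) \<gamma>"
proof -
  have "lc k = vscale (of_int (k \<gamma>)) \<gamma> + (\<Sum>\<alpha>\<in>B-{\<gamma>}. vscale (of_int (k \<alpha>)) \<alpha>)"
    unfolding lc_def using finB assms(1) by (simp add: sum.remove)
  also have "(\<Sum>\<alpha>\<in>B-{\<gamma>}. vscale (of_int (k \<alpha>)) \<alpha>) = 0"
    by (rule sum.neutral) (simp add: assms(2))
  finally show ?thesis by simp
qed

lemma lc_delta: assumes "\<gamma> \<in> B"
  shows "(\<Sum>\<alpha>\<in>B. vscale (of_int (if \<alpha> = \<gamma> then m else 0)) \<alpha>) = vscale (of_int m) \<gamma>"
proof -
  have "(\<Sum>\<alpha>\<in>B. vscale (of_int (if \<alpha> = \<gamma> then m else 0)) \<alpha>) = lc (\<lambda>\<alpha>. if \<alpha> = \<gamma> then m else 0)"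
    by (simp add: lc_def)
  also have "\<dots> = vscale (of_int m) \<gamma>" by (subst lc_single[OF assms]) auto
  finally show ?thesis .
qed

lemma B_Rp: "\<gamma> \<in> B \<Longrightarrow> \<gamma> \<in> Rp"
  unfolding Rp_def' using BR
  by (auto intro!: exI[of _ "\<lambda>\<alpha>. if \<alpha> = \<gamma> then 1 else 0"] simp: lc_def lc_delta[where m=1, simplified])

lemma R_split: "\<beta> \<in> R \<Longrightarrow> \<beta> \<in> Rp \<or> - \<beta> \<in> Rp"
proof -
  assume b: "\<beta> \<in> R"
  obtain k where k: "\<beta> = lc k" "(\<forall>\<alpha>\<in>B. k \<alpha> \<ge> 0) \<or> (\<forall>\<alpha>\<in>B. k \<alpha> \<le> 0)" using coords[OF b] by blast
  show ?thesis
  proof (cases "\<forall>\<alpha>\<in>B. k \<alpha> \<ge> 0")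
    case True then show ?thesis using k b by (auto simp: Rp_def')
  next
    case False
    then have "\<forall>\<alpha>\<in>B. - k \<alpha> \<ge> 0" using k by auto
    moreover have "- \<beta> = lc (\<lambda>\<alpha>. - k \<alpha>)" using k lc_uminus by simp
    ultimately show ?thesis using minus_R[OF b] by (auto simp: Rp_def')
  qed
qed

lemma Rp_disj: assumes "\<beta> \<in> Rp" shows "- \<beta> \<notin> Rp"
proof
  assume "- \<beta> \<in> Rp"
  then obtain j where j: "- \<beta> = lc j" "\<forall>\<alpha>\<in>B. j \<alpha> \<ge> 0" by (auto simp: Rp_def')
  obtain k where k: "\<beta> = lc k" "\<forall>\<alpha>\<in>B. k \<alpha> \<ge> 0" "\<beta> \<in> R" using assms by (auto simp: Rp_def')
  have "lc k = lc (\<lambda>\<alpha>. - j \<alpha>)" using j(1) k(1) lc_uminus[of j] by (metis minus_minus)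
  then have "\<forall>\<alpha>\<in>B. k \<alpha> = - j \<alpha>" using uniq by blast
  then have "\<forall>\<alpha>\<in>B. k \<alpha> = 0" using j(2) k(2) by force
  then have "\<beta> = 0" unfolding k(1) lc_def by simp
  then show False using k(3) zero_notin by simp
qed

lemma simple_perm: assumes g: "\<gamma> \<in> B" and b: "\<beta> \<in> Rp" and ne: "\<beta> \<noteq> \<gamma>"
  shows "sr \<gamma> \<beta> \<in> Rp" "sr \<gamma> \<beta> \<noteq> \<gamma>"
proof -
  have gR: "\<gamma> \<in> R" using g BR by blast
  obtain k where k: "\<beta> = lc k" "\<forall>\<alpha>\<in>B. k \<alpha> \<ge> 0" and bR: "\<beta> \<in> R" using b by (auto simp: Rp_def')
  obtain m where m: "pair \<beta> (Hc \<gamma>) = of_int m" using Hc(2)[OF gR bR] Ints_cases by metis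
  define k' where "k' = (\<lambda>\<alpha>. k \<alpha> - (if \<alpha> = \<gamma> then m else 0))"
  have srk: "sr \<gamma> \<beta> = lc k'"
  proof -
    have "lc k' = lc k - (\<Sum>\<alpha>\<in>B. vscale (of_int (if \<alpha> = \<gamma> then m else 0)) \<alpha>)"
      unfolding lc_def k'_def by (simp add: sum_subtractf[symmetric] vscale_diff_left del: of_int_eq_0_iff)
    also have "\<dots> = \<beta> - vscale (of_int m) \<gamma>" by (simp add: lc_delta[OF g] k(1))
    finally show ?thesis by (simp add: sr_def m)
  qed
  have "\<exists>\<delta>\<in>B. \<delta> \<noteq> \<gamma> \<and> k \<delta> > 0"
  proof (rule ccontr)
    assume "\<not> ?thesis"
    then have z: "\<And>\<delta>. \<delta> \<in> B \<Longrightarrow> \<delta> \<noteq> \<gamma> \<Longrightarrow> k \<delta> = 0" using k(2) by force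
    have "\<beta> = vscale (of_int (k \<gamma>)) \<gamma>" using lc_single[OF g z] k(1) by simp
    then have "(of_int (k \<gamma>) :: 'f) = 1 \<or> of_int (k \<gamma>) = (-1 :: 'f)" using reduced[OF gR] bR by metis
    then have "k \<gamma> = 1 \<or> k \<gamma> = -1" by (metis of_int_eq_1_iff of_int_eq_iff of_int_minus of_int_1)
    then have "k \<gamma> = 1" using k(2) g by force
    then have "\<beta> = \<gamma>" using \<open>\<beta> = vscale (of_int (k \<gamma>)) \<gamma>\<close> by simp
    then show False using ne by simp
  qed
  then obtain \<delta> where d: "\<delta> \<in> B" "\<delta> \<noteq> \<gamma>" "k \<delta> > 0" by blast
  obtain j where j: "sr \<gamma> \<beta> = lc j" "(\<forall>\<alpha>\<in>B. j \<alpha> \<ge> 0) \<or> (\<forall>\<alpha>\<in>B. j \<alpha> \<le> 0)"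
    using coords[OF sr_R[OF gR bR]] by blast
  have "j \<delta> = k' \<delta>" using uniq[of j k' \<delta>] j(1) srk d(1) by simp
  then have "j \<delta> > 0" using d by (simp add: k'_def)
  then have "\<forall>\<alpha>\<in>B. j \<alpha> \<ge> 0" using j(2) d(1) by force
  then show "sr \<gamma> \<beta> \<in> Rp" using j(1) sr_R[OF gR bR] by (auto simp: Rp_def')
  show "sr \<gamma> \<beta> \<noteq> \<gamma>"
  proof
    assume "sr \<gamma> \<beta> = \<gamma>"
    then have "\<beta> = sr \<gamma> \<gamma>" using sr_invol[OF gR] by metis
    then have "\<beta> = - \<gamma>" using sr_self[OF gR] by simp
    then show False using Rp_disj[OF B_Rp[OF g]] b by simp
  qed
qed

definition rho where "rho = halfsum Rp"

lemma vscale_cancel: assumes "vscale a (\<gamma>::'n \<Rightarrow> 'f) = vscale b \<gamma>" "\<gamma> \<noteq> 0" shows "a = b"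
proof -
  obtain i where "\<gamma> i \<noteq> 0" using assms(2) by (auto simp: fun_eq_iff zero_fun_apply)
  moreover have "a * \<gamma> i = b * \<gamma> i" using fun_cong[OF assms(1), of i] by (simp add: vscale_apply)
  ultimately show ?thesis by simp
qed

lemma rho_H: assumes g: "\<gamma> \<in> B" shows "pair rho (Hc \<gamma>) = 1"
proof -
  have gR: "\<gamma> \<in> R" using g BR by blast
  have gp: "\<gamma> \<in> Rp" using B_Rp[OF g] .
  have bij: "bij_betw (sr \<gamma>) (Rp - {\<gamma>}) (Rp - {\<gamma>})"
    by (rule bij_betw_byWitness[where f'="sr \<gamma>"]) (auto simp: sr_invol[OF gR] simple_perm[OF g])
  have "(\<Sum>\<alpha>\<in>Rp. sr \<gamma> \<alpha>) = sr \<gamma> \<gamma> + (\<Sum>\<alpha>\<in>Rp-{\<gamma>}. sr \<gamma> \<alpha>)"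
    using finRp gp by (simp add: sum.remove)
  also have "(\<Sum>\<alpha>\<in>Rp-{\<gamma>}. sr \<gamma> \<alpha>) = (\<Sum>\<alpha>\<in>Rp-{\<gamma>}. \<alpha>)"
    by (rule sum.reindex_bij_betw[OF bij, where g="\<lambda>x. x"])
  also have "(\<Sum>\<alpha>\<in>Rp-{\<gamma>}. \<alpha>) = (\<Sum>\<alpha>\<in>Rp. \<alpha>) - \<gamma>"
    using finRp gp by (simp add: sum_diff1)
  finally have e0: "(\<Sum>\<alpha>\<in>Rp. sr \<gamma> \<alpha>) = sr \<gamma> \<gamma> + ((\<Sum>\<alpha>\<in>Rp. \<alpha>) - \<gamma>)" .
  have e1: "(\<Sum>\<alpha>\<in>Rp. sr \<gamma> \<alpha>) = (\<Sum>\<alpha>\<in>Rp. \<alpha>) - vscale 2 \<gamma>"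
    unfolding e0 sr_self[OF gR] by (rule ext) (simp add: vscale_apply plus_fun_apply)
  have e2: "(\<Sum>\<alpha>\<in>Rp. sr \<gamma> \<alpha>) = (\<Sum>\<alpha>\<in>Rp. \<alpha>) - vscale (pair (\<Sum>\<alpha>\<in>Rp. \<alpha>) (Hc \<gamma>)) \<gamma>"
    unfolding sr_def by (simp add: sum_subtractf vscale_sum_left pair_sum_left)
  have "vscale (pair (\<Sum>\<alpha>\<in>Rp. \<alpha>) (Hc \<gamma>)) \<gamma> = vscale 2 \<gamma>" using e1 e2 by simp
  then have "pair (\<Sum>\<alpha>\<in>Rp. \<alpha>) (Hc \<gamma>) = 2"
    by (rule vscale_cancel) (use gR zero_notin in auto)
  then show ?thesis by (simp add: rho_def halfsum_def vsum_eq pair_scale_left)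
qed

lemma pos_pair: assumes b: "\<beta> \<in> Rp" shows "\<exists>q::rat. q > 0 \<and> pair rho (hof R \<beta>) = of_rat q"
proof -
  obtain k where k: "\<beta> = lc k" "\<forall>\<alpha>\<in>B. k \<alpha> \<ge> 0" and bR: "\<beta> \<in> R" using b by (auto simp: Rp_def')
  define q where "q = (\<Sum>\<alpha>\<in>B. of_int (k \<alpha>) * 2 / of_int (Ni \<alpha>) :: rat)"
  have "pair rho (hof R \<beta>) = (\<Sum>\<alpha>\<in>B. of_int (k \<alpha>) * (2 / Nc \<alpha> * pair rho (Hc \<alpha>)))"
    unfolding k(1) lc_def hof_sum hof_scale pair_sum_right pair_scale_right
    by (rule sum.cong) (use BR in \<open>auto simp: hof_root pair_scale_right\<close>)
  also have "\<dots> = (\<Sum>\<alpha>\<in>B. of_int (k \<alpha>) * 2 / of_int (Ni \<alpha>))"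
    by (rule sum.cong) (use BR in \<open>auto simp: rho_H Nc_Ni\<close>)
  also have "\<dots> = of_rat q"
    unfolding q_def of_rat_sum by (simp add: of_rat_divide of_rat_mult)
  finally have e: "pair rho (hof R \<beta>) = of_rat q" .
  have "\<exists>\<alpha>\<in>B. k \<alpha> > 0"
  proof (rule ccontr)
    assume "\<not> ?thesis"
    then have "\<forall>\<alpha>\<in>B. k \<alpha> = 0" using k(2) by force
    then have "\<beta> = 0" unfolding k(1) lc_def by simp
    then show False using bR zero_notin by simp
  qed
  then obtain \<alpha> where a: "\<alpha> \<in> B" "k \<alpha> > 0" by blast
  have Ni_pos: "\<And>\<alpha>. \<alpha> \<in> B \<Longrightarrow> Ni \<alpha> > 0" using Nc_Ni(2) BR by fastforce
  have "q > 0" unfolding q_def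
    by (rule sum_pos2[OF finB a(1)]) (use a Ni_pos k(2) in \<open>auto intro!: divide_nonneg_pos\<close>)
  then show ?thesis using e by blast
qed


lemma coroot_uminus: "coroot R (- \<alpha>) = - coroot R \<alpha>"
proof -
  have k: "kap (- x) (- x) = kap x x" for x
    by (simp add: kappa_uminus_left kappa_sym[of R x "- x"])
  show ?thesis unfolding coroot_def hof_uminus k by (simp add: vscale_uminus)
qed

context
  fixes \<Omega> :: "(('n \<Rightarrow> 'f) \<Rightarrow> 'f) set"
  assumes \<Omega>: "prime_ideal_S \<Omega>"
begin

abbreviation L where "L \<equiv> R_lam R \<Omega>"
abbreviation P where "P \<equiv> R_lam_pos R B \<Omega>"

lemma LR: "L \<subseteq> R" by (auto simp: R_lam_def)
lemma finL: "finite L" using LR finR finite_subset by blast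
lemma PL: "P \<subseteq> L" by (auto simp: R_lam_pos_def)
lemma PRp: "P \<subseteq> Rp" by (auto simp: R_lam_pos_def)
lemma finP: "finite P" using PL finL finite_subset by blast

lemma L_neg: assumes a: "\<alpha> \<in> L" shows "- \<alpha> \<in> L"
proof -
  obtain n :: int where n: "(\<lambda>\<xi>. as_S (coroot R \<alpha>) \<xi> - of_int n) \<in> \<Omega>" and aR: "\<alpha> \<in> R"
    using a by (auto simp: R_lam_def)
  have cl: "\<forall>f\<in>\<Omega>. \<forall>g\<in>polyfun. (\<lambda>\<xi>. g \<xi> * f \<xi>) \<in> \<Omega>"
    using \<Omega> unfolding prime_ideal_S_def by (elim conjE)
  have m: "(\<lambda>\<xi>. (\<lambda>\<xi>. -1) \<xi> * (\<lambda>\<xi>. as_S (coroot R \<alpha>) \<xi> - of_int n) \<xi>) \<in> \<Omega>"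
    by (rule cl[rule_format, OF n polyfun.pf_const])
  have e: "(\<lambda>\<xi>. (\<lambda>\<xi>. -1) \<xi> * (\<lambda>\<xi>. as_S (coroot R \<alpha>) \<xi> - of_int n) \<xi>)
     = (\<lambda>\<xi>. as_S (coroot R (- \<alpha>)) \<xi> - of_int (- n))"
    by (rule ext) (simp add: as_S_def coroot_uminus pair_uminus_right)
  have "(\<lambda>\<xi>. as_S (coroot R (- \<alpha>)) \<xi> - of_int (- n)) \<in> \<Omega>" using m unfolding e .
  then show ?thesis unfolding R_lam_def using minus_R[OF aR] by blast
qed

lemma L_split: "\<beta> \<in> L \<Longrightarrow> \<beta> \<in> P \<or> - \<beta> \<in> P"
  using R_split[of \<beta>] LR L_neg[of \<beta>] by (auto simp: R_lam_pos_def)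

lemma P_disj: "\<beta> \<in> P \<Longrightarrow> - \<beta> \<notin> P"
  using Rp_disj PRp by blast

lemma main:
  assumes w: "w \<in> weyl R"
    and wL: "w ` L = L"
    and nb: "\<not> (w ` B_lam R B \<Omega> \<subseteq> P)"
  shows "\<exists>c::rat. c > 0 \<and>
    dot_S R B w (as_S (hof R (halfsum P))) =
      (\<lambda>\<xi>. lin_S w (as_S (hof R (halfsum P))) \<xi> - of_rat c)"
proof -
  obtain w' where w': "w \<circ> w' = id" "w' \<circ> w = id" "lin w" "lin w'"
     "\<And>\<mu> \<nu>. pair (w' \<mu>) (hof R \<nu>) = pair \<mu> (hof R (w \<nu>))"
    using weyl_props[OF w] by blast
  have invw: "inv w = w'" by (rule inv_unique_comp[OF w'(1) w'(2)])
  have w2: "w' (w x) = x" for x using w'(2) by (metis comp_apply id_apply)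
  have injw: "inj w" by (metis w2 injI)
  have wneg: "w (- x) = - w x" for x by (rule lin_uminus[OF w'(3)])
  define Nn where "Nn = P - w ` P"
  have finNn: "finite Nn" using finP by (simp add: Nn_def)
  have NnP: "Nn \<subseteq> P" by (auto simp: Nn_def)
  have wPL: "w ` P \<subseteq> L" using PL wL by blast
  have dec: "w ` P = (P \<inter> w ` P) \<union> uminus ` Nn"
  proof (intro equalityI subsetI)
    fix \<beta> assume b: "\<beta> \<in> w ` P"
    then obtain \<alpha> where a: "\<alpha> \<in> P" "\<beta> = w \<alpha>" by blast
    show "\<beta> \<in> (P \<inter> w ` P) \<union> uminus ` Nn"
    proof (cases "\<beta> \<in> P")
      case True then show ?thesis using b by blast
    next
      case False
      then have mb: "- \<beta> \<in> P" using L_split wPL b by blast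
      have "- \<beta> \<notin> w ` P"
      proof
        assume "- \<beta> \<in> w ` P"
        then obtain \<alpha>' where a': "\<alpha>' \<in> P" "- \<beta> = w \<alpha>'" by blast
        then have "w (- \<alpha>) = w \<alpha>'" using a wneg by simp
        then have "- \<alpha> = \<alpha>'" using injw by (simp add: inj_eq)
        then show False using a' a P_disj by blast
      qed
      then have "- \<beta> \<in> Nn" using mb by (simp add: Nn_def)
      then show ?thesis by (metis UnI2 image_eqI minus_minus)
    qed
  next
    fix \<beta> assume b: "\<beta> \<in> (P \<inter> w ` P) \<union> uminus ` Nn"
    show "\<beta> \<in> w ` P"
    proof (cases "\<beta> \<in> P \<inter> w ` P")
      case True then show ?thesis by blast
    next
      case False
      then obtain \<gamma> where g: "\<gamma> \<in> Nn" "\<beta> = - \<gamma>" using b by blast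
      have gP: "\<gamma> \<in> P" "\<gamma> \<notin> w ` P" using g by (auto simp: Nn_def)
      have "- \<gamma> \<in> L" using L_neg PL gP by blast
      then obtain \<alpha> where a: "\<alpha> \<in> L" "- \<gamma> = w \<alpha>" using wL by (metis imageE)
      show ?thesis
      proof (cases "\<alpha> \<in> P")
        case True then show ?thesis using a g by blast
      next
        case False
        then have "- \<alpha> \<in> P" using L_split a by blast
        moreover have "w (- \<alpha>) = \<gamma>" using a wneg by (metis minus_minus)
        ultimately show ?thesis using gP by blast
      qed
    qed
  qed
  have disj: "(P \<inter> w ` P) \<inter> uminus ` Nn = {}"
    using NnP P_disj by (auto simp: minus_minus)
  have sumwP: "(\<Sum>\<alpha>\<in>P. w \<alpha>) = (\<Sum>\<alpha>\<in>P. \<alpha>) - (\<Sum>\<beta>\<in>Nn. \<beta>) - (\<Sum>\<beta>\<in>Nn. \<beta>)"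
  proof -
    have "(\<Sum>\<alpha>\<in>P. w \<alpha>) = (\<Sum>\<beta>\<in>w ` P. \<beta>)"
      using sum.reindex[OF inj_on_subset[OF injw subset_UNIV], of "\<lambda>x. x" P] by (simp only: o_def)
    also have "\<dots> = (\<Sum>\<beta>\<in>(P \<inter> w ` P) \<union> uminus ` Nn. \<beta>)" by (simp only: dec[symmetric])
    also have "\<dots> = (\<Sum>\<beta>\<in>P \<inter> w ` P. \<beta>) + (\<Sum>\<beta>\<in>uminus ` Nn. \<beta>)"
      by (rule sum.union_disjoint) (use finP finNn disj in auto)
    also have "(\<Sum>\<beta>\<in>uminus ` Nn. \<beta>) = - (\<Sum>\<beta>\<in>Nn. \<beta>)"
      by (subst sum.reindex) (auto simp: inj_on_def sum_negf)
    also have "(\<Sum>\<beta>\<in>P \<inter> w ` P. \<beta>) = (\<Sum>\<alpha>\<in>P. \<alpha>) - (\<Sum>\<beta>\<in>Nn. \<beta>)"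
      using sum.Int_Diff[OF finP, of "\<lambda>x. x" "w ` P"] by (simp add: Nn_def)
    finally show ?thesis by (metis diff_conv_add_uminus)
  qed
  define rp where "rp = halfsum P"
  have rp: "rp = vscale (1/2) (\<Sum>\<alpha>\<in>P. \<alpha>)" by (simp add: rp_def halfsum_def vsum_eq)
  have wrp: "w rp = vscale (1/2) (\<Sum>\<alpha>\<in>P. w \<alpha>)"
    using w'(3) unfolding rp lin_def by (simp add: lin_sum[OF w'(3)])
  have diff: "rp - w rp = (\<Sum>\<beta>\<in>Nn. \<beta>)"
    unfolding wrp unfolding sumwP unfolding rp by (rule ext) (simp add: vscale_apply algebra_simps)
  define q where "q = (\<lambda>\<beta>. SOME q::rat. q > 0 \<and> pair rho (hof R \<beta>) = of_rat q)"
  have q: "q \<beta> > 0" "pair rho (hof R \<beta>) = of_rat (q \<beta>)" if "\<beta> \<in> Nn" for \<beta>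
  proof -
    have "\<beta> \<in> Rp" using that NnP PRp by blast
    from someI_ex[OF pos_pair[OF this]] show "q \<beta> > 0" "pair rho (hof R \<beta>) = of_rat (q \<beta>)"
      unfolding q_def by blast+
  qed
  define c where "c = (\<Sum>\<beta>\<in>Nn. q \<beta>)"
  have Nn_ne: "Nn \<noteq> {}"
  proof -
    obtain \<gamma> where g: "\<gamma> \<in> B_lam R B \<Omega>" "w \<gamma> \<notin> P" using nb by blast
    have gP: "\<gamma> \<in> P" using g(1) by (simp add: B_lam_def)
    then have "w \<gamma> \<in> L" using PL wL by blast
    then have m: "- w \<gamma> \<in> P" using L_split g(2) by blast
    have "- w \<gamma> \<notin> w ` P"
    proof
      assume "- w \<gamma> \<in> w ` P"
      then obtain \<alpha> where a: "\<alpha> \<in> P" "- w \<gamma> = w \<alpha>" by blast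
      then have "w (- \<gamma>) = w \<alpha>" using wneg by simp
      then have "- \<gamma> = \<alpha>" using injw by (simp add: inj_eq)
      then show False using a gP P_disj by blast
    qed
    then have "- w \<gamma> \<in> Nn" using m by (simp add: Nn_def)
    then show ?thesis by blast
  qed
  have cpos: "c > 0" unfolding c_def
    by (rule sum_pos[OF finNn Nn_ne]) (use q in auto)
  have ceq: "pair rho (hof R rp) - pair rho (hof R (w rp)) = of_rat c"
  proof -
    have "pair rho (hof R rp) - pair rho (hof R (w rp)) = pair rho (hof R (rp - w rp))"
      by (simp add: hof_diff pair_diff_right)
    also have "\<dots> = (\<Sum>\<beta>\<in>Nn. pair rho (hof R \<beta>))" unfolding diff by (simp add: hof_sum pair_sum_right)
    also have "\<dots> = (\<Sum>\<beta>\<in>Nn. of_rat (q \<beta>))" by (rule sum.cong) (simp_all add: q)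
    also have "\<dots> = of_rat c" by (simp add: c_def of_rat_sum)
    finally show ?thesis .
  qed
  have "dot_S R B w (as_S (hof R rp)) = (\<lambda>\<xi>. lin_S w (as_S (hof R rp)) \<xi> - of_rat c)"
  proof (rule ext)
    fix \<xi>
    have "dot_S R B w (as_S (hof R rp)) \<xi> = pair (w' (\<xi> + rho) - rho) (hof R rp)"
      by (simp add: dot_S_def dot_def as_S_def invw vsub_eq vadd_eq rho_def)
    also have "\<dots> = pair (w' \<xi>) (hof R rp) + pair (w' rho) (hof R rp) - pair rho (hof R rp)"
      using w'(4) by (simp add: lin_def pair_add_left pair_diff_left)
    also have "\<dots> = pair (w' \<xi>) (hof R rp) - of_rat c"
      using w'(5)[of rho rp] by (simp add: algebra_simps ceq[symmetric])
    also have "\<dots> = lin_S w (as_S (hof R rp)) \<xi> - of_rat c"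
      by (simp add: lin_S_def as_S_def invw)
    finally show "dot_S R B w (as_S (hof R rp)) \<xi> = lin_S w (as_S (hof R rp)) \<xi> - of_rat c" .
  qed
  then show ?thesis using cpos unfolding rp_def by blast
qed

end
end


theorem mainTheorem15:
  fixes R B :: "('n::finite \<Rightarrow> 'f::field_char_0) set"
    and \<Omega> :: "(('n \<Rightarrow> 'f) \<Rightarrow> 'f) set"
    and w :: "('n \<Rightarrow> 'f) \<Rightarrow> ('n \<Rightarrow> 'f)"
  assumes "alg_closed_type TYPE('f)"
    and "root_system R"
    and "is_base R B"
    and "prime_ideal_S \<Omega>"
    and "strongly_dominant R B \<Omega>"
    and "w \<in> weyl R"
    and "w ` R_lam R \<Omega> = R_lam R \<Omega>"
    and "\<not> (w ` B_lam R B \<Omega> \<subseteq> R_lam_pos R B \<Omega>)"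
  shows "\<exists>c::rat. c > 0 \<and>
    dot_S R B w (as_S (hof R (halfsum (R_lam_pos R B \<Omega>)))) =
      (\<lambda>\<xi>. lin_S w (as_S (hof R (halfsum (R_lam_pos R B \<Omega>)))) \<xi> - of_rat c)"
proof -
  interpret RSB R B using assms(2,3) by (simp add: RSB_def RS_def RSB_axioms_def)
  show ?thesis using main[OF assms(4) assms(6,7,8)] .
qed

end
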